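(* Let $G$ be a simplicial group and $M$ an abelian $\pi_0(G)$-module. The map $C^1(\pi_0(G),M)\to C^1(G,M)$, $c\mapsto (g_0\mapsto c(g_0B_0NG))$, restricts to an isomorphism $Z^1(\pi_0(G),M)\to Z^1(G,M)$, which in turn restricts to an isomorphism $B^1(\pi_0(G),M)\to B^1(G,M)$. In particular $H^1(G,M)\cong H^1(\pi_0(G),M)$.
   Context: Simplicial group $G$ (faces $d_k$), $N_1G=\ker d_1\subseteq G_1$, $B_0NG=d_0(N_1G)$, $\pi_0(G)=G_0/B_0NG$. Cochain complex of $G$: $C^n(G,M)=\mathrm{Map}(G_{n-1}\times\cdots\times G_0,M)$; in low degrees $C^0=M$, $C^1=\mathrm{Map}(G_0,M)$, $C^2=\mathrm{Map}(G_1\times G_0,M)$, $(dc)(g_0)=c-\langle g_0\rangle\cdot c$ for $c\in C^0$, and $(dc)(g_1,g_0)=c(d_0g_1)-c((d_1g_1)g_0)+\langle g_1\rangle\cdot c(g_0)$ for $c\in C^1$, where $\langle g\rangle$ is the class in $\pi_0(G)$ of $g$ (resp. of $d_1g$). For a group $\Pi$: $C^1(\Pi,M)=\mathrm{Map}(\Pi,M)$, $(dc)(h,g)=c(h)-c(hg)+h\cdot c(g)$, $(dc)(g)=c-g\cdot c$ on $C^0=M$; $Z^1,B^1,H^1$ as usual. *)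

theory Defs
  imports "HOL-Algebra.Algebra"
begin

text \<open>G n is the group of n-simplices; d n i : G (Suc n) -> G n is the i-th face map
  (i \<le> Suc n); s n j : G n -> G (Suc n) is the j-th degeneracy (j \<le> n).\<close>

definition simplicial_group ::
  "(nat \<Rightarrow> 'a monoid) \<Rightarrow> (nat \<Rightarrow> nat \<Rightarrow> 'a \<Rightarrow> 'a) \<Rightarrow> (nat \<Rightarrow> nat \<Rightarrow> 'a \<Rightarrow> 'a) \<Rightarrow> bool" where
  "simplicial_group G d s \<longleftrightarrow>
     (\<forall>n. group (G n)) \<and>
     (\<forall>n i. i \<le> Suc n \<longrightarrow> d n i \<in> hom (G (Suc n)) (G n)) \<and>
     (\<forall>n j. j \<le> n \<longrightarrow> s n j \<in> hom (G n) (G (Suc n))) \<and>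
     (\<forall>n i j x. i < j \<and> j \<le> Suc (Suc n) \<and> x \<in> carrier (G (Suc (Suc n))) \<longrightarrow>
        d n i (d (Suc n) j x) = d n (j - 1) (d (Suc n) i x)) \<and>
     (\<forall>n i j x. i < j \<and> j \<le> Suc n \<and> x \<in> carrier (G (Suc n)) \<longrightarrow>
        d (Suc n) i (s (Suc n) j x) = s n (j - 1) (d n i x)) \<and>
     (\<forall>n j x. j \<le> n \<and> x \<in> carrier (G n) \<longrightarrow>
        d n j (s n j x) = x \<and> d n (Suc j) (s n j x) = x) \<and>
     (\<forall>n i j x. Suc j < i \<and> i \<le> Suc (Suc n) \<and> j \<le> n \<and> x \<in> carrier (G (Suc n)) \<longrightarrow>
        d (Suc n) i (s (Suc n) j x) = s n j (d n (i - 1) x)) \<and>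
     (\<forall>n i j x. i \<le> j \<and> j \<le> n \<and> x \<in> carrier (G n) \<longrightarrow>
        s (Suc n) i (s n j x) = s (Suc n) (Suc j) (s n i x))"

definition N1 :: "(nat \<Rightarrow> 'a monoid) \<Rightarrow> (nat \<Rightarrow> nat \<Rightarrow> 'a \<Rightarrow> 'a) \<Rightarrow> 'a set" where
  "N1 G d = {x \<in> carrier (G 1). d 0 1 x = \<one>\<^bsub>G 0\<^esub>}"

definition B0N :: "(nat \<Rightarrow> 'a monoid) \<Rightarrow> (nat \<Rightarrow> nat \<Rightarrow> 'a \<Rightarrow> 'a) \<Rightarrow> 'a set" where
  "B0N G d = d 0 0 ` N1 G d"

definition pi0 :: "(nat \<Rightarrow> 'a monoid) \<Rightarrow> (nat \<Rightarrow> nat \<Rightarrow> 'a \<Rightarrow> 'a) \<Rightarrow> 'a set monoid" where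
  "pi0 G d = G 0 Mod B0N G d"

definition cls :: "(nat \<Rightarrow> 'a monoid) \<Rightarrow> (nat \<Rightarrow> nat \<Rightarrow> 'a \<Rightarrow> 'a) \<Rightarrow> 'a \<Rightarrow> 'a set" where
  "cls G d g = B0N G d #>\<^bsub>G 0\<^esub> g"

text \<open>An abelian P-module: abelian group M (written multiplicatively) with a left action of
  P by group endomorphisms.\<close>
definition is_module :: "'p monoid \<Rightarrow> 'm monoid \<Rightarrow> ('p \<Rightarrow> 'm \<Rightarrow> 'm) \<Rightarrow> bool" where
  "is_module P M act \<longleftrightarrow> comm_group M \<and>
     (\<forall>x\<in>carrier P. act x \<in> hom M M) \<and>
     (\<forall>m\<in>carrier M. act \<one>\<^bsub>P\<^esub> m = m) \<and>
     (\<forall>x\<in>carrier P. \<forall>y\<in>carrier P. \<forall>m\<in>carrier M. act (x \<otimes>\<^bsub>P\<^esub> y) m = act x (act y m))"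

definition cochain_grp :: "'x set \<Rightarrow> 'm monoid \<Rightarrow> ('x \<Rightarrow> 'm) monoid" where
  "cochain_grp A M = \<lparr> carrier = A \<rightarrow>\<^sub>E carrier M,
      monoid.mult = (\<lambda>f g. \<lambda>x\<in>A. f x \<otimes>\<^bsub>M\<^esub> g x), monoid.one = (\<lambda>x\<in>A. \<one>\<^bsub>M\<^esub>) \<rparr>"

definition Z1_grp_set :: "'p monoid \<Rightarrow> 'm monoid \<Rightarrow> ('p \<Rightarrow> 'm \<Rightarrow> 'm) \<Rightarrow> ('p \<Rightarrow> 'm) set" where
  "Z1_grp_set P M act = {c \<in> carrier P \<rightarrow>\<^sub>E carrier M.
     \<forall>h\<in>carrier P. \<forall>g\<in>carrier P.
       c h \<otimes>\<^bsub>M\<^esub> inv\<^bsub>M\<^esub> (c (h \<otimes>\<^bsub>P\<^esub> g)) \<otimes>\<^bsub>M\<^esub> act h (c g) = \<one>\<^bsub>M\<^esub>}"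

definition B1_grp_set :: "'p monoid \<Rightarrow> 'm monoid \<Rightarrow> ('p \<Rightarrow> 'm \<Rightarrow> 'm) \<Rightarrow> ('p \<Rightarrow> 'm) set" where
  "B1_grp_set P M act = {c. \<exists>m\<in>carrier M. c = (\<lambda>g\<in>carrier P. m \<otimes>\<^bsub>M\<^esub> inv\<^bsub>M\<^esub> (act g m))}"

definition Z1_grp :: "'p monoid \<Rightarrow> 'm monoid \<Rightarrow> ('p \<Rightarrow> 'm \<Rightarrow> 'm) \<Rightarrow> ('p \<Rightarrow> 'm) monoid" where
  "Z1_grp P M act = (cochain_grp (carrier P) M)\<lparr>carrier := Z1_grp_set P M act\<rparr>"

definition B1_grp :: "'p monoid \<Rightarrow> 'm monoid \<Rightarrow> ('p \<Rightarrow> 'm \<Rightarrow> 'm) \<Rightarrow> ('p \<Rightarrow> 'm) monoid" where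
  "B1_grp P M act = (cochain_grp (carrier P) M)\<lparr>carrier := B1_grp_set P M act\<rparr>"

definition H1_grp :: "'p monoid \<Rightarrow> 'm monoid \<Rightarrow> ('p \<Rightarrow> 'm \<Rightarrow> 'm) \<Rightarrow> ('p \<Rightarrow> 'm) set monoid" where
  "H1_grp P M act = Z1_grp P M act Mod B1_grp_set P M act"

definition Z1_sg_set :: "(nat \<Rightarrow> 'a monoid) \<Rightarrow> (nat \<Rightarrow> nat \<Rightarrow> 'a \<Rightarrow> 'a) \<Rightarrow> 'm monoid
    \<Rightarrow> ('a set \<Rightarrow> 'm \<Rightarrow> 'm) \<Rightarrow> ('a \<Rightarrow> 'm) set" where
  "Z1_sg_set G d M act = {c \<in> carrier (G 0) \<rightarrow>\<^sub>E carrier M.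
     \<forall>g1\<in>carrier (G 1). \<forall>g0\<in>carrier (G 0).
       c (d 0 0 g1) \<otimes>\<^bsub>M\<^esub> inv\<^bsub>M\<^esub> (c (d 0 1 g1 \<otimes>\<^bsub>G 0\<^esub> g0))
         \<otimes>\<^bsub>M\<^esub> act (cls G d (d 0 1 g1)) (c g0) = \<one>\<^bsub>M\<^esub>}"

definition B1_sg_set :: "(nat \<Rightarrow> 'a monoid) \<Rightarrow> (nat \<Rightarrow> nat \<Rightarrow> 'a \<Rightarrow> 'a) \<Rightarrow> 'm monoid
    \<Rightarrow> ('a set \<Rightarrow> 'm \<Rightarrow> 'm) \<Rightarrow> ('a \<Rightarrow> 'm) set" where
  "B1_sg_set G d M act = {c. \<exists>m\<in>carrier M.
     c = (\<lambda>g0\<in>carrier (G 0). m \<otimes>\<^bsub>M\<^esub> inv\<^bsub>M\<^esub> (act (cls G d g0) m))}"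

definition Z1_sg :: "(nat \<Rightarrow> 'a monoid) \<Rightarrow> (nat \<Rightarrow> nat \<Rightarrow> 'a \<Rightarrow> 'a) \<Rightarrow> 'm monoid
    \<Rightarrow> ('a set \<Rightarrow> 'm \<Rightarrow> 'm) \<Rightarrow> ('a \<Rightarrow> 'm) monoid" where
  "Z1_sg G d M act = (cochain_grp (carrier (G 0)) M)\<lparr>carrier := Z1_sg_set G d M act\<rparr>"

definition B1_sg :: "(nat \<Rightarrow> 'a monoid) \<Rightarrow> (nat \<Rightarrow> nat \<Rightarrow> 'a \<Rightarrow> 'a) \<Rightarrow> 'm monoid
    \<Rightarrow> ('a set \<Rightarrow> 'm \<Rightarrow> 'm) \<Rightarrow> ('a \<Rightarrow> 'm) monoid" where
  "B1_sg G d M act = (cochain_grp (carrier (G 0)) M)\<lparr>carrier := B1_sg_set G d M act\<rparr>"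

definition H1_sg :: "(nat \<Rightarrow> 'a monoid) \<Rightarrow> (nat \<Rightarrow> nat \<Rightarrow> 'a \<Rightarrow> 'a) \<Rightarrow> 'm monoid
    \<Rightarrow> ('a set \<Rightarrow> 'm \<Rightarrow> 'm) \<Rightarrow> ('a \<Rightarrow> 'm) set monoid" where
  "H1_sg G d M act = Z1_sg G d M act Mod B1_sg_set G d M act"

definition infl :: "(nat \<Rightarrow> 'a monoid) \<Rightarrow> (nat \<Rightarrow> nat \<Rightarrow> 'a \<Rightarrow> 'a) \<Rightarrow> ('a set \<Rightarrow> 'm) \<Rightarrow> ('a \<Rightarrow> 'm)" where
  "infl G d c = (\<lambda>g0\<in>carrier (G 0). c (cls G d g0))"

end

theory Submission imports Defs begin

lemma img_rcos:
  assumes "\<And>x y. f (x \<otimes>\<^bsub>A\<^esub> y) = f x \<otimes>\<^bsub>B\<^esub> f y"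
  shows "f ` (H #>\<^bsub>A\<^esub> a) = (f ` H) #>\<^bsub>B\<^esub> f a"
  unfolding r_coset_def by (simp add: image_UN assms)

lemma img_setmult:
  assumes "\<And>x y. f (x \<otimes>\<^bsub>A\<^esub> y) = f x \<otimes>\<^bsub>B\<^esub> f y"
  shows "f ` (set_mult A U V) = set_mult B (f ` U) (f ` V)"
  unfolding set_mult_def by (simp add: image_UN assms)

locale P35 =
  fixes G :: "nat \<Rightarrow> 'a monoid" and d s :: "nat \<Rightarrow> nat \<Rightarrow> 'a \<Rightarrow> 'a"
    and M :: "'m monoid" and act :: "'a set \<Rightarrow> 'm \<Rightarrow> 'm"
  assumes sg: "simplicial_group G d s"
    and md: "is_module (pi0 G d) M act"
begin

declare One_nat_def[simp del]

abbreviation "G0 \<equiv> G 0"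
abbreviation "G1 \<equiv> G 1"
abbreviation "B \<equiv> B0N G d"

lemmas parts = sg[unfolded simplicial_group_def]
lemma grp: "group (G n)" using parts[THEN conjunct1] by blast
lemma homs: "\<forall>n i. i \<le> Suc n \<longrightarrow> d n i \<in> hom (G (Suc n)) (G n)"
  using parts[THEN conjunct2, THEN conjunct1] .
lemma d00: "d 0 0 \<in> hom G1 G0" using homs[rule_format, of 0 0] unfolding One_nat_def by blast
lemma d01: "d 0 1 \<in> hom G1 G0" using homs[rule_format, of 1 0] unfolding One_nat_def by blast
lemma s00: "s 0 0 \<in> hom G0 G1"
proof -
  have "\<forall>n j. j \<le> n \<longrightarrow> s n j \<in> hom (G n) (G (Suc n))" using parts[THEN conjunct2, THEN conjunct2, THEN conjunct1] .
  from this[rule_format, of 0 0] show ?thesis unfolding One_nat_def by blast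
qed
lemma ds: "x \<in> carrier G0 \<Longrightarrow> d 0 0 (s 0 0 x) = x \<and> d 0 1 (s 0 0 x) = x"
proof -
  have "\<forall>n j x. j \<le> n \<and> x \<in> carrier (G n) \<longrightarrow> d n j (s n j x) = x \<and> d n (Suc j) (s n j x) = x"
    using parts[THEN conjunct2, THEN conjunct2, THEN conjunct2, THEN conjunct2, THEN conjunct2, THEN conjunct1] .
  from this[rule_format, of 0 0 x] show "x \<in> carrier G0 \<Longrightarrow> ?thesis" unfolding One_nat_def by blast
qed

interpretation g0: group G0 by (rule grp)
interpretation g1: group G1 by (rule grp)
interpretation h0: group_hom G1 G0 "d 0 0" by (simp add: group_hom_def group_hom_axioms_def grp d00)
interpretation h1: group_hom G1 G0 "d 0 1" by (simp add: group_hom_def group_hom_axioms_def grp d01)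
interpretation hs: group_hom G0 G1 "s 0 0" by (simp add: group_hom_def group_hom_axioms_def grp s00)

lemma B_sub: "B \<subseteq> carrier G0"
  unfolding B0N_def N1_def using h0.hom_closed by auto

lemma B_normal: "B \<lhd> G0"
proof -
  have sub: "subgroup B G0"
  proof (rule g0.subgroupI)
    show "B \<subseteq> carrier G0" by (rule B_sub)
    have "\<one>\<^bsub>G1\<^esub> \<in> N1 G d" unfolding N1_def by simp
    then show "B \<noteq> {}" unfolding B0N_def by blast
  next
    fix a assume "a \<in> B"
    then obtain x where x: "x \<in> carrier G1" "d 0 1 x = \<one>\<^bsub>G0\<^esub>" "a = d 0 0 x" unfolding B0N_def N1_def by auto
    have "inv\<^bsub>G1\<^esub> x \<in> N1 G d" unfolding N1_def using x by simp
    moreover have "d 0 0 (inv\<^bsub>G1\<^esub> x) = inv\<^bsub>G0\<^esub> a" using x by simp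
    ultimately show "inv\<^bsub>G0\<^esub> a \<in> B" unfolding B0N_def by (metis image_eqI)
  next
    fix a b assume "a \<in> B" "b \<in> B"
    then obtain x y where x: "x \<in> carrier G1" "d 0 1 x = \<one>\<^bsub>G0\<^esub>" "a = d 0 0 x"
      and y: "y \<in> carrier G1" "d 0 1 y = \<one>\<^bsub>G0\<^esub>" "b = d 0 0 y" unfolding B0N_def N1_def by auto
    have "x \<otimes>\<^bsub>G1\<^esub> y \<in> N1 G d" unfolding N1_def using x y by simp
    moreover have "d 0 0 (x \<otimes>\<^bsub>G1\<^esub> y) = a \<otimes>\<^bsub>G0\<^esub> b" using x y by simp
    ultimately show "a \<otimes>\<^bsub>G0\<^esub> b \<in> B" unfolding B0N_def by (metis image_eqI)
  qed
  show ?thesis unfolding g0.normal_inv_iff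
  proof (intro conjI sub ballI)
    fix g a assume g: "g \<in> carrier G0" and "a \<in> B"
    then obtain x where x: "x \<in> carrier G1" "d 0 1 x = \<one>\<^bsub>G0\<^esub>" "a = d 0 0 x" unfolding B0N_def N1_def by auto
    let ?y = "s 0 0 g \<otimes>\<^bsub>G1\<^esub> x \<otimes>\<^bsub>G1\<^esub> inv\<^bsub>G1\<^esub> s 0 0 g"
    have "?y \<in> N1 G d" unfolding N1_def using g x ds[OF g] by simp
    moreover have "d 0 0 ?y = g \<otimes>\<^bsub>G0\<^esub> a \<otimes>\<^bsub>G0\<^esub> inv\<^bsub>G0\<^esub> g" using g x ds[OF g] by simp
    ultimately show "g \<otimes>\<^bsub>G0\<^esub> a \<otimes>\<^bsub>G0\<^esub> inv\<^bsub>G0\<^esub> g \<in> B" unfolding B0N_def by (metis image_eqI)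
  qed
qed


interpretation nb: normal B G0 by (rule B_normal)

abbreviation "P \<equiv> pi0 G d"
definition rep :: "'a set \<Rightarrow> 'a" where "rep C = (SOME g. g \<in> C)"

lemma cls_carrier: "g \<in> carrier G0 \<Longrightarrow> cls G d g \<in> carrier P"
  unfolding cls_def pi0_def FactGroup_def using g0.rcosetsI B_sub by simp

lemma P_carrier: "C \<in> carrier P \<Longrightarrow> \<exists>g\<in>carrier G0. C = cls G d g"
  unfolding cls_def pi0_def FactGroup_def RCOSETS_def by auto

lemma P_mult: "a \<in> carrier G0 \<Longrightarrow> b \<in> carrier G0 \<Longrightarrow> cls G d a \<otimes>\<^bsub>P\<^esub> cls G d b = cls G d (a \<otimes>\<^bsub>G0\<^esub> b)"
  unfolding cls_def pi0_def FactGroup_def using nb.rcos_sum by simp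

lemma P_one: "\<one>\<^bsub>P\<^esub> = cls G d \<one>\<^bsub>G0\<^esub>"
  unfolding cls_def pi0_def FactGroup_def using B_sub by simp

lemma cls_eq: "a \<in> carrier G0 \<Longrightarrow> b \<in> carrier G0 \<Longrightarrow> a \<otimes>\<^bsub>G0\<^esub> inv\<^bsub>G0\<^esub> b \<in> B \<Longrightarrow> cls G d a = cls G d b"
  unfolding cls_def
  by (metis nb.subgroup_axioms g0.is_group g0.repr_independence subgroup.rcos_module)

lemma rep: "C \<in> carrier P \<Longrightarrow> rep C \<in> carrier G0 \<and> cls G d (rep C) = C"
proof -
  assume "C \<in> carrier P"
  then obtain g where g: "g \<in> carrier G0" "C = cls G d g" using P_carrier by blast
  have "g \<in> C" unfolding g cls_def using g0.rcos_self[OF g(1) nb.subgroup_axioms] .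
  then have r: "rep C \<in> C" unfolding rep_def by (rule someI)
  then have "rep C \<in> carrier G0" unfolding g cls_def
    using nb.elemrcos_carrier[OF g0.is_group g(1)] by blast
  moreover have "cls G d (rep C) = C" unfolding g cls_def
    using g0.repr_independence[OF r[unfolded g cls_def] g(1) nb.subgroup_axioms] by simp
  ultimately show ?thesis by simp
qed

lemma F2: "g1 \<in> carrier G1 \<Longrightarrow> cls G d (d 0 0 g1) = cls G d (d 0 1 g1)"
proof -
  assume g1: "g1 \<in> carrier G1"
  let ?x = "g1 \<otimes>\<^bsub>G1\<^esub> inv\<^bsub>G1\<^esub> s 0 0 (d 0 1 g1)"
  have c: "d 0 1 g1 \<in> carrier G0" using g1 by simp
  have "?x \<in> N1 G d" unfolding N1_def using g1 ds[OF c] by (simp add: g0.r_inv)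
  moreover have "d 0 0 ?x = d 0 0 g1 \<otimes>\<^bsub>G0\<^esub> inv\<^bsub>G0\<^esub> d 0 1 g1" using g1 ds[OF c] by simp
  ultimately have "d 0 0 g1 \<otimes>\<^bsub>G0\<^esub> inv\<^bsub>G0\<^esub> d 0 1 g1 \<in> B" unfolding B0N_def by (metis image_eqI)
  then show ?thesis using cls_eq g1 by simp
qed


interpretation cm: comm_group M using md unfolding is_module_def by blast

lemma act_hom: "C \<in> carrier P \<Longrightarrow> act C \<in> hom M M"
  using md unfolding is_module_def by blast
lemma act_closed: "C \<in> carrier P \<Longrightarrow> m \<in> carrier M \<Longrightarrow> act C m \<in> carrier M"
  using act_hom by (auto simp: hom_def)
lemma act_1: "C \<in> carrier P \<Longrightarrow> act C \<one>\<^bsub>M\<^esub> = \<one>\<^bsub>M\<^esub>"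
  using act_hom cm.is_group by (simp add: group_hom.hom_one group_hom_axioms_def group_hom_def)
lemma act_one: "m \<in> carrier M \<Longrightarrow> act \<one>\<^bsub>P\<^esub> m = m"
  using md unfolding is_module_def by blast

lemma Z1sg_one: assumes c: "c \<in> Z1_sg_set G d M act" shows "c \<one>\<^bsub>G0\<^esub> = \<one>\<^bsub>M\<^esub>"
proof -
  have cM: "c \<one>\<^bsub>G0\<^esub> \<in> carrier M" using c unfolding Z1_sg_set_def by auto
  have "c (d 0 0 \<one>\<^bsub>G1\<^esub>) \<otimes>\<^bsub>M\<^esub> inv\<^bsub>M\<^esub> (c (d 0 1 \<one>\<^bsub>G1\<^esub> \<otimes>\<^bsub>G0\<^esub> \<one>\<^bsub>G0\<^esub>))
         \<otimes>\<^bsub>M\<^esub> act (cls G d (d 0 1 \<one>\<^bsub>G1\<^esub>)) (c \<one>\<^bsub>G0\<^esub>) = \<one>\<^bsub>M\<^esub>"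
    using c unfolding Z1_sg_set_def by blast
  then have "c \<one>\<^bsub>G0\<^esub> \<otimes>\<^bsub>M\<^esub> inv\<^bsub>M\<^esub> (c \<one>\<^bsub>G0\<^esub>) \<otimes>\<^bsub>M\<^esub> c \<one>\<^bsub>G0\<^esub> = \<one>\<^bsub>M\<^esub>"
    using act_one[OF cM] by (simp add: P_one)
  then show ?thesis using cM by (simp add: cm.r_inv)
qed

lemma Z1sg_inv: assumes c: "c \<in> Z1_sg_set G d M act" and a: "a \<in> carrier G0" and b: "b \<in> carrier G0"
  and e: "cls G d a = cls G d b" shows "c a = c b"
proof -
  have "a \<in> cls G d b" using e g0.rcos_self[OF a nb.subgroup_axioms] unfolding cls_def by simp
  then have "a \<otimes>\<^bsub>G0\<^esub> inv\<^bsub>G0\<^esub> b \<in> B" unfolding cls_def using nb.rcos_module[OF g0.is_group b a] by simp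
  then obtain x where x: "x \<in> carrier G1" "d 0 1 x = \<one>\<^bsub>G0\<^esub>" "a \<otimes>\<^bsub>G0\<^esub> inv\<^bsub>G0\<^esub> b = d 0 0 x"
    unfolding B0N_def N1_def by auto
  let ?g = "x \<otimes>\<^bsub>G1\<^esub> s 0 0 b"
  have g: "?g \<in> carrier G1" using x b by simp
  have d0: "d 0 0 ?g = a" using x b ds[OF b] a
    by (simp, metis g0.inv_solve_right' g0.inv_closed g0.m_closed g0.m_assoc g0.l_inv g0.r_one)
  have d1: "d 0 1 ?g = b" using x b ds[OF b] by simp
  have "c (d 0 0 ?g) \<otimes>\<^bsub>M\<^esub> inv\<^bsub>M\<^esub> (c (d 0 1 ?g \<otimes>\<^bsub>G0\<^esub> \<one>\<^bsub>G0\<^esub>))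
         \<otimes>\<^bsub>M\<^esub> act (cls G d (d 0 1 ?g)) (c \<one>\<^bsub>G0\<^esub>) = \<one>\<^bsub>M\<^esub>"
    using c g unfolding Z1_sg_set_def by blast
  then have "c a \<otimes>\<^bsub>M\<^esub> inv\<^bsub>M\<^esub> (c b) = \<one>\<^bsub>M\<^esub>"
    using d0 d1 b Z1sg_one[OF c] act_1[OF cls_carrier[OF b]] c a by (simp add: Z1_sg_set_def PiE_def Pi_def)
  then show ?thesis using c a b unfolding Z1_sg_set_def
    by (metis (no_types, lifting) PiE_mem cm.inv_closed cm.inv_equality cm.inv_inv cm.m_comm mem_Collect_eq)
qed


definition rho :: "('a \<Rightarrow> 'm) \<Rightarrow> ('a set \<Rightarrow> 'm)" where
  "rho c' = (\<lambda>C\<in>carrier P. c' (rep C))"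

lemma infl_mult: "infl G d (c \<otimes>\<^bsub>cochain_grp (carrier P) M\<^esub> c') =
    infl G d c \<otimes>\<^bsub>cochain_grp (carrier G0) M\<^esub> infl G d c'"
  unfolding infl_def cochain_grp_def by (auto simp: cls_carrier)

lemma rho_mult: "rho (c \<otimes>\<^bsub>cochain_grp (carrier G0) M\<^esub> c') =
    rho c \<otimes>\<^bsub>cochain_grp (carrier P) M\<^esub> rho c'"
  unfolding rho_def cochain_grp_def by (auto simp: rep)

lemma rho_infl: "c \<in> extensional (carrier P) \<Longrightarrow> rho (infl G d c) = c"
  unfolding rho_def infl_def by (auto simp: rep extensional_def)

definition good :: "('a \<Rightarrow> 'm) set" where
  "good = {c'. c' \<in> extensional (carrier G0) \<and> (\<forall>a\<in>carrier G0. \<forall>b\<in>carrier G0. cls G d a = cls G d b \<longrightarrow> c' a = c' b)}"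

lemma infl_rho: assumes c: "c' \<in> good" shows "infl G d (rho c') = c'"
proof (rule ext)
  fix x
  show "infl G d (rho c') x = c' x"
  proof (cases "x \<in> carrier G0")
    case True
    have r: "rep (cls G d x) \<in> carrier G0" "cls G d (rep (cls G d x)) = cls G d x"
      using rep[OF cls_carrier[OF True]] by auto
    have "c' (rep (cls G d x)) = c' x" using c r True unfolding good_def by blast
    then show ?thesis unfolding infl_def rho_def using True cls_carrier[OF True] by simp
  next
    case False
    then show ?thesis using c unfolding infl_def good_def extensional_def by simp
  qed
qed

lemma good_mult: assumes "c \<in> good" "c' \<in> good" shows "c \<otimes>\<^bsub>cochain_grp (carrier G0) M\<^esub> c' \<in> good"
proof -
  have m: "c \<otimes>\<^bsub>cochain_grp (carrier G0) M\<^esub> c' = (\<lambda>x\<in>carrier G0. c x \<otimes>\<^bsub>M\<^esub> c' x)"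
    unfolding cochain_grp_def by simp
  show ?thesis unfolding m good_def
  proof (intro CollectI conjI ballI impI)
    show "(\<lambda>x\<in>carrier G0. c x \<otimes>\<^bsub>M\<^esub> c' x) \<in> extensional (carrier G0)" by simp
    fix a b assume ab: "a \<in> carrier G0" "b \<in> carrier G0" "cls G d a = cls G d b"
    have "c a = c b" "c' a = c' b" using assms ab unfolding good_def by blast+
    then show "(\<lambda>x\<in>carrier G0. c x \<otimes>\<^bsub>M\<^esub> c' x) a = (\<lambda>x\<in>carrier G0. c x \<otimes>\<^bsub>M\<^esub> c' x) b"
      using ab by simp
  qed
qed

lemma ext_mult: "c \<otimes>\<^bsub>cochain_grp (carrier P) M\<^esub> c' \<in> extensional (carrier P)"
  unfolding cochain_grp_def by simp

lemma Z1sg_good: assumes c: "c \<in> Z1_sg_set G d M act" shows "c \<in> good"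
proof -
  have "c \<in> extensional (carrier G0)" using c unfolding Z1_sg_set_def PiE_def by blast
  then show ?thesis unfolding good_def using Z1sg_inv[OF c] by blast
qed

lemma B1sg_good: assumes c: "c \<in> B1_sg_set G d M act" shows "c \<in> good"
proof -
  obtain m where m: "c = (\<lambda>g0\<in>carrier G0. m \<otimes>\<^bsub>M\<^esub> inv\<^bsub>M\<^esub> (act (cls G d g0) m))"
    using c unfolding B1_sg_set_def by blast
  show ?thesis unfolding good_def m by simp
qed

lemma infl_Z1: assumes c: "c \<in> Z1_grp_set P M act" shows "infl G d c \<in> Z1_sg_set G d M act"
proof -
  have cP: "c \<in> carrier P \<rightarrow>\<^sub>E carrier M" using c unfolding Z1_grp_set_def by blast
  have "infl G d c \<in> carrier G0 \<rightarrow>\<^sub>E carrier M" unfolding infl_def using cP cls_carrier by auto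
  moreover have "infl G d c (d 0 0 g1) \<otimes>\<^bsub>M\<^esub> inv\<^bsub>M\<^esub> (infl G d c (d 0 1 g1 \<otimes>\<^bsub>G0\<^esub> g0))
         \<otimes>\<^bsub>M\<^esub> act (cls G d (d 0 1 g1)) (infl G d c g0) = \<one>\<^bsub>M\<^esub>"
    if g1: "g1 \<in> carrier G1" and g0: "g0 \<in> carrier G0" for g1 g0
  proof -
    have a: "d 0 1 g1 \<in> carrier G0" using g1 by simp
    have "c (cls G d (d 0 1 g1)) \<otimes>\<^bsub>M\<^esub> inv\<^bsub>M\<^esub> (c (cls G d (d 0 1 g1) \<otimes>\<^bsub>P\<^esub> cls G d g0))
           \<otimes>\<^bsub>M\<^esub> act (cls G d (d 0 1 g1)) (c (cls G d g0)) = \<one>\<^bsub>M\<^esub>"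
      using c cls_carrier[OF a] cls_carrier[OF g0] unfolding Z1_grp_set_def by blast
    then show ?thesis unfolding infl_def using g1 g0 a F2[OF g1] P_mult[OF a g0] by simp
  qed
  ultimately show ?thesis unfolding Z1_sg_set_def by blast
qed

lemma rho_Z1: assumes c: "c \<in> Z1_sg_set G d M act" shows "rho c \<in> Z1_grp_set P M act"
proof -
  have cG: "c \<in> carrier G0 \<rightarrow>\<^sub>E carrier M" using c unfolding Z1_sg_set_def by blast
  have "rho c \<in> carrier P \<rightarrow>\<^sub>E carrier M" unfolding rho_def
  proof (rule restrict_PiE_iff[THEN iffD2], intro ballI)
    fix C assume "C \<in> carrier P" then have "rep C \<in> carrier G0" using rep by blast
    then show "c (rep C) \<in> carrier M" using cG by blast
  qed
  moreover have "rho c h \<otimes>\<^bsub>M\<^esub> inv\<^bsub>M\<^esub> (rho c (h \<otimes>\<^bsub>P\<^esub> g)) \<otimes>\<^bsub>M\<^esub> act h (rho c g) = \<one>\<^bsub>M\<^esub>"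
    if h: "h \<in> carrier P" and g: "g \<in> carrier P" for h g
  proof -
    define a where "a = rep h"
    define b where "b = rep g"
    have a: "a \<in> carrier G0" "h = cls G d a" using rep[OF h] unfolding a_def by auto
    have b: "b \<in> carrier G0" "g = cls G d b" using rep[OF g] unfolding b_def by auto
    have ab: "a \<otimes>\<^bsub>G0\<^esub> b \<in> carrier G0" using a b by simp
    have hg: "h \<otimes>\<^bsub>P\<^esub> g = cls G d (a \<otimes>\<^bsub>G0\<^esub> b)" using a b P_mult by simp
    have r: "rho c (cls G d x) = c x" if x: "x \<in> carrier G0" for x
    proof -
      have r1: "rep (cls G d x) \<in> carrier G0" "cls G d (rep (cls G d x)) = cls G d x"
        using rep[OF cls_carrier[OF x]] by auto
      have "c (rep (cls G d x)) = c x" by (rule Z1sg_inv[OF c r1(1) x r1(2)])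
      then show ?thesis unfolding rho_def using cls_carrier[OF x] by simp
    qed
    have s: "s 0 0 a \<in> carrier G1" using a by simp
    have "c (d 0 0 (s 0 0 a)) \<otimes>\<^bsub>M\<^esub> inv\<^bsub>M\<^esub> (c (d 0 1 (s 0 0 a) \<otimes>\<^bsub>G0\<^esub> b))
         \<otimes>\<^bsub>M\<^esub> act (cls G d (d 0 1 (s 0 0 a))) (c b) = \<one>\<^bsub>M\<^esub>"
      using c s b unfolding Z1_sg_set_def by blast
    then have "c a \<otimes>\<^bsub>M\<^esub> inv\<^bsub>M\<^esub> (c (a \<otimes>\<^bsub>G0\<^esub> b)) \<otimes>\<^bsub>M\<^esub> act (cls G d a) (c b) = \<one>\<^bsub>M\<^esub>"
      using ds[OF a(1)] by simp
    moreover have "rho c h = c a" using r a by simp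
    moreover have "rho c g = c b" using r b by simp
    moreover have "rho c (h \<otimes>\<^bsub>P\<^esub> g) = c (a \<otimes>\<^bsub>G0\<^esub> b)" using r[OF ab] hg by simp
    ultimately show ?thesis using a(2) by simp
  qed
  ultimately show ?thesis unfolding Z1_grp_set_def by blast
qed

lemma infl_B1: assumes c: "c \<in> B1_grp_set P M act" shows "infl G d c \<in> B1_sg_set G d M act"
proof -
  obtain m where m: "m \<in> carrier M" "c = (\<lambda>g\<in>carrier P. m \<otimes>\<^bsub>M\<^esub> inv\<^bsub>M\<^esub> (act g m))"
    using c unfolding B1_grp_set_def by blast
  have "infl G d c = (\<lambda>g0\<in>carrier G0. m \<otimes>\<^bsub>M\<^esub> inv\<^bsub>M\<^esub> (act (cls G d g0) m))"
    unfolding m infl_def by (rule ext) (simp add: cls_carrier)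
  then show ?thesis unfolding B1_sg_set_def using m by blast
qed

lemma rho_B1: assumes c: "c \<in> B1_sg_set G d M act" shows "rho c \<in> B1_grp_set P M act"
proof -
  obtain m where m: "m \<in> carrier M" "c = (\<lambda>g0\<in>carrier G0. m \<otimes>\<^bsub>M\<^esub> inv\<^bsub>M\<^esub> (act (cls G d g0) m))"
    using c unfolding B1_sg_set_def by blast
  have "rho c = (\<lambda>g\<in>carrier P. m \<otimes>\<^bsub>M\<^esub> inv\<^bsub>M\<^esub> (act g m))"
    unfolding m rho_def by (rule ext) (simp add: rep)
  then show ?thesis unfolding B1_grp_set_def using m by blast
qed


lemma mZ1g: "monoid.mult (Z1_grp P M act) = monoid.mult (cochain_grp (carrier P) M)"
  by (simp add: Z1_grp_def)
lemma mZ1s: "monoid.mult (Z1_sg G d M act) = monoid.mult (cochain_grp (carrier G0) M)"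
  by (simp add: Z1_sg_def)
lemma cZ1g: "carrier (Z1_grp P M act) = Z1_grp_set P M act" by (simp add: Z1_grp_def)
lemma cZ1s: "carrier (Z1_sg G d M act) = Z1_sg_set G d M act" by (simp add: Z1_sg_def)

lemma Z1g_ext: "c \<in> Z1_grp_set P M act \<Longrightarrow> c \<in> extensional (carrier P)"
  unfolding Z1_grp_set_def PiE_def by blast
lemma B1g_ext: "c \<in> B1_grp_set P M act \<Longrightarrow> c \<in> extensional (carrier P)"
  unfolding B1_grp_set_def by auto

lemma iso1: "infl G d \<in> iso (Z1_grp P M act) (Z1_sg G d M act)"
  unfolding iso_def hom_def
proof (intro CollectI conjI)
  show "infl G d \<in> carrier (Z1_grp P M act) \<rightarrow> carrier (Z1_sg G d M act)"
    unfolding cZ1g cZ1s using infl_Z1 by blast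
  show "\<forall>x\<in>carrier (Z1_grp P M act). \<forall>y\<in>carrier (Z1_grp P M act).
     infl G d (x \<otimes>\<^bsub>Z1_grp P M act\<^esub> y) = infl G d x \<otimes>\<^bsub>Z1_sg G d M act\<^esub> infl G d y"
    unfolding mZ1g mZ1s using infl_mult by blast
  show "bij_betw (infl G d) (carrier (Z1_grp P M act)) (carrier (Z1_sg G d M act))"
    unfolding cZ1g cZ1s
    by (rule bij_betw_byWitness[where f'=rho])
       (auto simp: rho_infl Z1g_ext infl_rho Z1sg_good infl_Z1 rho_Z1)
qed

lemma mB1g: "monoid.mult (B1_grp P M act) = monoid.mult (cochain_grp (carrier P) M)"
  by (simp add: B1_grp_def)
lemma mB1s: "monoid.mult (B1_sg G d M act) = monoid.mult (cochain_grp (carrier G0) M)"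
  by (simp add: B1_sg_def)
lemma cB1g: "carrier (B1_grp P M act) = B1_grp_set P M act" by (simp add: B1_grp_def)
lemma cB1s: "carrier (B1_sg G d M act) = B1_sg_set G d M act" by (simp add: B1_sg_def)

lemma iso2: "infl G d \<in> iso (B1_grp P M act) (B1_sg G d M act)"
  unfolding iso_def hom_def
proof (intro CollectI conjI)
  show "infl G d \<in> carrier (B1_grp P M act) \<rightarrow> carrier (B1_sg G d M act)"
    unfolding cB1g cB1s using infl_B1 by blast
  show "\<forall>x\<in>carrier (B1_grp P M act). \<forall>y\<in>carrier (B1_grp P M act).
     infl G d (x \<otimes>\<^bsub>B1_grp P M act\<^esub> y) = infl G d x \<otimes>\<^bsub>B1_sg G d M act\<^esub> infl G d y"
    unfolding mB1g mB1s using infl_mult by blast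
  show "bij_betw (infl G d) (carrier (B1_grp P M act)) (carrier (B1_sg G d M act))"
    unfolding cB1g cB1s
    by (rule bij_betw_byWitness[where f'=rho])
       (auto simp: rho_infl B1g_ext infl_rho B1sg_good infl_B1 rho_B1)
qed


lemma rhoK: "rho ` B1_sg_set G d M act = B1_grp_set P M act"
proof
  show "rho ` B1_sg_set G d M act \<subseteq> B1_grp_set P M act" using rho_B1 by blast
  show "B1_grp_set P M act \<subseteq> rho ` B1_sg_set G d M act"
  proof
    fix c assume c: "c \<in> B1_grp_set P M act"
    then have "c = rho (infl G d c)" using rho_infl B1g_ext by simp
    then show "c \<in> rho ` B1_sg_set G d M act" using infl_B1[OF c] by blast
  qed
qed

lemma inflK: "infl G d ` B1_grp_set P M act = B1_sg_set G d M act"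
proof
  show "infl G d ` B1_grp_set P M act \<subseteq> B1_sg_set G d M act" using infl_B1 by blast
  show "B1_sg_set G d M act \<subseteq> infl G d ` B1_grp_set P M act"
  proof
    fix c assume c: "c \<in> B1_sg_set G d M act"
    then have "c = infl G d (rho c)" using infl_rho B1sg_good by simp
    then show "c \<in> infl G d ` B1_grp_set P M act" using rho_B1[OF c] by blast
  qed
qed

lemma rho_hom: "rho (x \<otimes>\<^bsub>Z1_sg G d M act\<^esub> y) = rho x \<otimes>\<^bsub>Z1_grp P M act\<^esub> rho y"
  unfolding mZ1s mZ1g by (rule rho_mult)
lemma infl_hom: "infl G d (x \<otimes>\<^bsub>Z1_grp P M act\<^esub> y) = infl G d x \<otimes>\<^bsub>Z1_sg G d M act\<^esub> infl G d y"
  unfolding mZ1s mZ1g by (rule infl_mult)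

lemma cH1s: "carrier (H1_sg G d M act) = rcosets\<^bsub>Z1_sg G d M act\<^esub> B1_sg_set G d M act"
  by (simp add: H1_sg_def FactGroup_def)
lemma cH1g: "carrier (H1_grp P M act) = rcosets\<^bsub>Z1_grp P M act\<^esub> B1_grp_set P M act"
  by (simp add: H1_grp_def FactGroup_def)
lemma mH1s: "monoid.mult (H1_sg G d M act) = set_mult (Z1_sg G d M act)"
  by (simp add: H1_sg_def FactGroup_def)
lemma mH1g: "monoid.mult (H1_grp P M act) = set_mult (Z1_grp P M act)"
  by (simp add: H1_grp_def FactGroup_def)

lemma iso3: "(\<lambda>Y. rho ` Y) \<in> iso (H1_sg G d M act) (H1_grp P M act)"
  unfolding iso_def hom_def
proof (intro CollectI conjI)
  show "(\<lambda>Y. rho ` Y) \<in> carrier (H1_sg G d M act) \<rightarrow> carrier (H1_grp P M act)"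
  proof
    fix Y assume "Y \<in> carrier (H1_sg G d M act)"
    then obtain a where a: "a \<in> Z1_sg_set G d M act" "Y = B1_sg_set G d M act #>\<^bsub>Z1_sg G d M act\<^esub> a"
      unfolding cH1s RCOSETS_def cZ1s by blast
    have "rho ` Y = B1_grp_set P M act #>\<^bsub>Z1_grp P M act\<^esub> rho a"
      unfolding a(2) img_rcos[where f=rho, OF rho_hom] rhoK ..
    then show "rho ` Y \<in> carrier (H1_grp P M act)"
      unfolding cH1g RCOSETS_def cZ1g using rho_Z1[OF a(1)] by blast
  qed
  show "\<forall>x\<in>carrier (H1_sg G d M act). \<forall>y\<in>carrier (H1_sg G d M act).
     rho ` (x \<otimes>\<^bsub>H1_sg G d M act\<^esub> y) = rho ` x \<otimes>\<^bsub>H1_grp P M act\<^esub> rho ` y"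
    unfolding mH1s mH1g using img_setmult[where f=rho, OF rho_hom] by blast
  show "bij_betw (\<lambda>Y. rho ` Y) (carrier (H1_sg G d M act)) (carrier (H1_grp P M act))"
  proof (rule bij_betw_byWitness[where f'="\<lambda>W. infl G d ` W"])
    show "\<forall>Y\<in>carrier (H1_sg G d M act). infl G d ` rho ` Y = Y"
    proof
      fix Y assume "Y \<in> carrier (H1_sg G d M act)"
      then obtain a where a: "a \<in> Z1_sg_set G d M act" "Y = B1_sg_set G d M act #>\<^bsub>Z1_sg G d M act\<^esub> a"
        unfolding cH1s RCOSETS_def cZ1s by blast
      have "Y \<subseteq> good"
      proof
        fix y assume "y \<in> Y"
        then obtain h where h: "h \<in> B1_sg_set G d M act" "y = h \<otimes>\<^bsub>Z1_sg G d M act\<^esub> a"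
          unfolding a(2) r_coset_def by blast
        show "y \<in> good" unfolding h(2) mZ1s
          using good_mult[OF B1sg_good[OF h(1)] Z1sg_good[OF a(1)]] .
      qed
      then show "infl G d ` rho ` Y = Y" unfolding image_image using infl_rho by (simp add: subset_iff)
    qed
    show "\<forall>W\<in>carrier (H1_grp P M act). rho ` infl G d ` W = W"
    proof
      fix W assume "W \<in> carrier (H1_grp P M act)"
      then obtain a where a: "a \<in> Z1_grp_set P M act" "W = B1_grp_set P M act #>\<^bsub>Z1_grp P M act\<^esub> a"
        unfolding cH1g RCOSETS_def cZ1g by blast
      have "W \<subseteq> extensional (carrier P)"
      proof
        fix y assume "y \<in> W"
        then obtain h where h: "h \<in> B1_grp_set P M act" "y = h \<otimes>\<^bsub>Z1_grp P M act\<^esub> a"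
          unfolding a(2) r_coset_def by blast
        show "y \<in> extensional (carrier P)" unfolding h(2) mZ1g by (rule ext_mult)
      qed
      then show "rho ` infl G d ` W = W" unfolding image_image using rho_infl by (simp add: subset_iff)
    qed
    show "(\<lambda>Y. rho ` Y) ` carrier (H1_sg G d M act) \<subseteq> carrier (H1_grp P M act)"
    proof
      fix Z assume "Z \<in> (\<lambda>Y. rho ` Y) ` carrier (H1_sg G d M act)"
      then obtain Y where Y: "Y \<in> carrier (H1_sg G d M act)" "Z = rho ` Y" by blast
      then obtain a where a: "a \<in> Z1_sg_set G d M act" "Y = B1_sg_set G d M act #>\<^bsub>Z1_sg G d M act\<^esub> a"
        unfolding cH1s RCOSETS_def cZ1s by blast
      have "Z = B1_grp_set P M act #>\<^bsub>Z1_grp P M act\<^esub> rho a"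
        unfolding Y(2) a(2) img_rcos[where f=rho, OF rho_hom] rhoK ..
      then show "Z \<in> carrier (H1_grp P M act)"
        unfolding cH1g RCOSETS_def cZ1g using rho_Z1[OF a(1)] by blast
    qed
    show "(\<lambda>W. infl G d ` W) ` carrier (H1_grp P M act) \<subseteq> carrier (H1_sg G d M act)"
    proof
      fix Z assume "Z \<in> (\<lambda>W. infl G d ` W) ` carrier (H1_grp P M act)"
      then obtain W where W: "W \<in> carrier (H1_grp P M act)" "Z = infl G d ` W" by blast
      then obtain a where a: "a \<in> Z1_grp_set P M act" "W = B1_grp_set P M act #>\<^bsub>Z1_grp P M act\<^esub> a"
        unfolding cH1g RCOSETS_def cZ1g by blast
      have "Z = B1_sg_set G d M act #>\<^bsub>Z1_sg G d M act\<^esub> infl G d a"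
        unfolding W(2) a(2) img_rcos[where f="infl G d", OF infl_hom] inflK ..
      then show "Z \<in> carrier (H1_sg G d M act)"
        unfolding cH1s RCOSETS_def cZ1s using infl_Z1[OF a(1)] by blast
    qed
  qed
qed

end

theorem proposition3p5:
  fixes G :: "nat \<Rightarrow> 'a monoid" and d s :: "nat \<Rightarrow> nat \<Rightarrow> 'a \<Rightarrow> 'a"
    and M :: "'m monoid" and act :: "'a set \<Rightarrow> 'm \<Rightarrow> 'm"
  assumes "simplicial_group G d s"
    and "is_module (pi0 G d) M act"
  shows "infl G d \<in> iso (Z1_grp (pi0 G d) M act) (Z1_sg G d M act)
     \<and> infl G d \<in> iso (B1_grp (pi0 G d) M act) (B1_sg G d M act)
     \<and> H1_sg G d M act \<cong> H1_grp (pi0 G d) M act"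
proof -
  interpret P35 G d s M act using assms by (rule P35.intro)
  show ?thesis using iso1 iso2 iso3 is_isoI by blast
qed

end
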